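(* Consider the non-stationary $N$-armed stochastic bandit problem (described in the context) in a slowly-varying environment with non-stationarity parameter $\epsilon_T\le C\,T^{-\kappa}$ for some constant $C>0$ and some known $\kappa>0$. Fix $\kappa_{\max}\in(0,\tfrac43)$, let $\tilde\kappa=\min\{\kappa,\kappa_{\max}\}$ and $\rho=\frac{3\tilde\kappa}{4-3\tilde\kappa}$. Run the LM-DSEE algorithm with $a=b=1$, this $\rho$, the epoch-dependent exploration constant $\gamma=\gamma_k=2(k^\rho l)^{2/3}$ in epoch $k$ (so $L(k)=\lceil 2(k^\rho l)^{2/3}\ln(k^\rho l)\rceil$), and $l>0$ chosen so that $\lceil k^\rho l\rceil-NL(k)\ge0$ for all $k\ge1$. Then the expected cumulative regret satisfies \[ R^{\text{LM-DSEE}}(T)\in O\big(T^{\frac{3+2\rho}{3+3\rho}}\ln T\big)\quad\text{as }T\to\infty. \]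
   Context: Non-stationary stochastic MAB: there are $N$ arms. At each time $t\in\{1,\dots,T\}$ the decision-maker picks an arm $j_t$ and receives a reward $r_t$ drawn (independently of the past, given the chosen arm and time) from a distribution supported on $[0,1]$ with mean $\mu_{j_t}(t)\in[0,1]$; the means $\mu_j(t)$ are unknown and may depend on $t$. Let $\mu_{j_t^*}(t)=\max_{j}\mu_j(t)$. The expected cumulative regret of a policy is $R(T)=\sum_{t=1}^T \mathbb{E}[\mu_{j_t^*}(t)-\mu_{j_t}(t)]$, the expectation being over the randomness of the chosen arms. Slowly-varying environment: for every arm $j$ and every $t\in\{1,\dots,T-1\}$, $|\mu_j(t+1)-\mu_j(t)|\le \epsilon_T$; $\epsilon_T$ is called the non-stationarity parameter. LM-DSEE algorithm (parameters $a>0$, $b\in(0,1]$, $\rho>0$, $\gamma>0$ (possibly depending on the epoch index), $l>0$): time is divided into consecutive epochs $k=1,2,\dots$ until time $T$ is reached. Epoch $k$ consists of (i) an exploration phase: for each arm $j=1,\dots,N$, arm $j$ is played $L(k)=\lceil \gamma\ln(k^\rho l b)\rceil$ times consecutively, and $\bar r^{\,\text{epch}}_j(k)$ is the sample mean of the $L(k)$ rewards of arm $j$ collected in this exploration phase only; followed by (ii) an exploitation phase: the arm $j^{\text{epch}}_k\in\arg\max_j \bar r^{\,\text{epch}}_j(k)$ is played $\lceil a k^\rho l\rceil - N L(k)$ times. Thus epoch $k$ has length $\lceil a k^\rho l\rceil$. The hidden constant in the $O(\cdot)$ may depend on $N,\kappa,\kappa_{\max},C,l$ but not on $T$. *)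

theory Defs
  imports "HOL-Probability.Probability"
begin

text \<open>Arms are indexed 0..N-1, times 1..T. nu j t is the reward distribution of arm j
at time t (a probability measure on the reals concentrated on [0,1]).\<close>

definition reward_env :: "nat \<Rightarrow> nat \<Rightarrow> (nat \<Rightarrow> nat \<Rightarrow> real measure) \<Rightarrow> bool" where
  "reward_env N T nu \<longleftrightarrow>
     (\<forall>j<N. \<forall>t\<in>{1..T}. prob_space (nu j t) \<and> sets (nu j t) = sets borel \<and>
        (AE x in nu j t. 0 \<le> x \<and> x \<le> 1))"

definition arm_mean :: "(nat \<Rightarrow> nat \<Rightarrow> real measure) \<Rightarrow> nat \<Rightarrow> nat \<Rightarrow> real" where
  "arm_mean nu j t = (\<integral>x. x \<partial>(nu j t))"

definition slowly_varying :: "nat \<Rightarrow> nat \<Rightarrow> (nat \<Rightarrow> nat \<Rightarrow> real measure) \<Rightarrow> real \<Rightarrow> bool" where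
  "slowly_varying N T nu eps \<longleftrightarrow>
     (\<forall>j<N. \<forall>t\<in>{1..<T}. \<bar>arm_mean nu j (Suc t) - arm_mean nu j t\<bar> \<le> eps)"

text \<open>Probability space: an independent table of rewards omega (j,t) ~ nu j t;
 playing arm j at time t yields the reward omega (j,t).\<close>
definition reward_space :: "nat \<Rightarrow> nat \<Rightarrow> (nat \<Rightarrow> nat \<Rightarrow> real measure) \<Rightarrow> (nat \<times> nat \<Rightarrow> real) measure" where
  "reward_space N T nu = (\<Pi>\<^sub>M p\<in>{..<N} \<times> {1..T}. nu (fst p) (snd p))"

text \<open>Expected cumulative regret of a policy, given as the arm played at time t as a function
 of the reward table.\<close>
definition regret :: "nat \<Rightarrow> nat \<Rightarrow> (nat \<Rightarrow> nat \<Rightarrow> real measure)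
     \<Rightarrow> ((nat \<times> nat \<Rightarrow> real) \<Rightarrow> nat \<Rightarrow> nat) \<Rightarrow> real" where
  "regret N T nu pol =
     (\<Sum>t\<in>{1..T}. \<integral>\<omega>. (Max ((\<lambda>j. arm_mean nu j t) ` {..<N}) - arm_mean nu (pol \<omega> t) t)
        \<partial>(reward_space N T nu))"

definition epoch_len :: "real \<Rightarrow> real \<Rightarrow> real \<Rightarrow> nat \<Rightarrow> nat" where
  "epoch_len a \<rho> l k = nat \<lceil>a * real k powr \<rho> * l\<rceil>"

definition expl_len :: "real \<Rightarrow> real \<Rightarrow> (nat \<Rightarrow> real) \<Rightarrow> real \<Rightarrow> nat \<Rightarrow> nat" where
  "expl_len b \<rho> \<gamma> l k = nat \<lceil>\<gamma> k * ln (real k powr \<rho> * l * b)\<rceil>"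

text \<open>First time step of epoch k (k >= 1); time starts at 1.\<close>
definition epoch_start :: "real \<Rightarrow> real \<Rightarrow> real \<Rightarrow> nat \<Rightarrow> nat" where
  "epoch_start a \<rho> l k = 1 + (\<Sum>i\<in>{1..<k}. epoch_len a \<rho> l i)"

definition epoch_of :: "real \<Rightarrow> real \<Rightarrow> real \<Rightarrow> nat \<Rightarrow> nat" where
  "epoch_of a \<rho> l t = (LEAST k. 1 \<le> k \<and> t < epoch_start a \<rho> l (Suc k))"

text \<open>Sample mean of arm j over its L(k) exploration rewards in epoch k
 (arm j is explored at times start(k) + j L(k) + i, i < L(k)).\<close>
definition expl_mean :: "real \<Rightarrow> real \<Rightarrow> real \<Rightarrow> (nat \<Rightarrow> real) \<Rightarrow> real
     \<Rightarrow> (nat \<times> nat \<Rightarrow> real) \<Rightarrow> nat \<Rightarrow> nat \<Rightarrow> real" where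
  "expl_mean a b \<rho> \<gamma> l \<omega> k j =
     (let L = expl_len b \<rho> \<gamma> l k; s = epoch_start a \<rho> l k in
      (\<Sum>i<L. \<omega> (j, s + j * L + i)) / real L)"

definition exploit_arm :: "nat \<Rightarrow> real \<Rightarrow> real \<Rightarrow> real \<Rightarrow> (nat \<Rightarrow> real) \<Rightarrow> real
     \<Rightarrow> (nat \<times> nat \<Rightarrow> real) \<Rightarrow> nat \<Rightarrow> nat" where
  "exploit_arm N a b \<rho> \<gamma> l \<omega> k =
     (LEAST j. j < N \<and> (\<forall>j'<N. expl_mean a b \<rho> \<gamma> l \<omega> k j' \<le> expl_mean a b \<rho> \<gamma> l \<omega> k j))"

definition lmdsee :: "nat \<Rightarrow> real \<Rightarrow> real \<Rightarrow> real \<Rightarrow> (nat \<Rightarrow> real) \<Rightarrow> real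
     \<Rightarrow> (nat \<times> nat \<Rightarrow> real) \<Rightarrow> nat \<Rightarrow> nat" where
  "lmdsee N a b \<rho> \<gamma> l \<omega> t =
     (let k = epoch_of a \<rho> l t; m = t - epoch_start a \<rho> l k; L = expl_len b \<rho> \<gamma> l k in
      if m < N * L then m div L else exploit_arm N a b \<rho> \<gamma> l \<omega> k)"

end

theory Submission
  imports Defs
begin

lemma int_le_helper:
  fixes f g :: "'a \<Rightarrow> real"
  assumes "integrable M g" "\<And>x. x \<in> space M \<Longrightarrow> f x \<le> g x" "\<And>x. x \<in> space M \<Longrightarrow> 0 \<le> g x"
  shows "integral\<^sup>L M f \<le> integral\<^sup>L M g"
proof (cases "integrable M f")
  case True then show ?thesis using assms by (intro integral_mono) auto
next
  case False then show ?thesis using assms by (simp add: not_integrable_integral_eq integral_nonneg_AE)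
qed

locale bandit =
  fixes N T :: nat and nu :: "nat \<Rightarrow> nat \<Rightarrow> real measure"
  assumes env: "reward_env N T nu"
begin

definition "Ix = {..<N} \<times> {1..T}"
definition "Mp p = (if p \<in> Ix then nu (fst p) (snd p) else return borel 0)"
abbreviation "M \<equiv> reward_space N T nu"

lemma finI: "finite Ix" unfolding Ix_def by auto

lemma env_at: "j < N \<Longrightarrow> t \<in> {1..T} \<Longrightarrow> prob_space (nu j t) \<and> sets (nu j t) = sets borel \<and> (AE x in nu j t. 0 \<le> x \<and> x \<le> 1)"
  using env unfolding reward_env_def by blast

lemma Mp_in: "p \<in> Ix \<Longrightarrow> prob_space (Mp p) \<and> sets (Mp p) = sets borel \<and> (AE x in Mp p. 0 \<le> x \<and> x \<le> 1)"
proof -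
  assume p: "p \<in> Ix"
  obtain j t where pj: "p = (j,t)" by (cases p)
  have "j < N" "t \<in> {1..T}" using p pj unfolding Ix_def by auto
  moreover have "Mp p = nu j t" using p pj unfolding Mp_def by simp
  ultimately show ?thesis using env_at by metis
qed

lemma Mp_out: "p \<notin> Ix \<Longrightarrow> prob_space (Mp p) \<and> sets (Mp p) = sets borel \<and> (AE x in Mp p. 0 \<le> x \<and> x \<le> 1)"
  unfolding Mp_def by (simp add: prob_space_return AE_return)

lemma Mp_all: "prob_space (Mp p) \<and> sets (Mp p) = sets borel \<and> (AE x in Mp p. 0 \<le> x \<and> x \<le> 1)"
  using Mp_in Mp_out by blast

lemma Mp_prob: "prob_space (Mp p)" using Mp_all by blast
lemma Mp_sets: "sets (Mp p) = sets borel" using Mp_all by blast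
lemma Mp_AE: "AE x in Mp p. 0 \<le> x \<and> x \<le> 1" using Mp_all by blast

lemma M_eq: "M = PiM Ix Mp"
  unfolding reward_space_def Ix_def Mp_def by (rule PiM_cong) simp_all

lemma PPI: "product_prob_space Mp"
proof -
  have "product_sigma_finite Mp" unfolding product_sigma_finite_def
    using Mp_prob prob_space_imp_sigma_finite by blast
  then show ?thesis using Mp_prob by (simp add: product_prob_space_def product_prob_space_axioms_def)
qed

lemma M_prob: "prob_space M"
  unfolding M_eq by (rule prob_space_PiM) (rule Mp_prob)

lemma Mp_int: "integrable (Mp p) (\<lambda>x. x)"
proof -
  have fm: "finite_measure (Mp p)" using Mp_prob[of p] by (simp add: prob_space_def)
  show ?thesis
    by (rule finite_measure.integrable_const_bound[OF fm, where B=1]) (use Mp_AE[of p] in \<open>auto simp: measurable_cong_sets[OF Mp_sets refl]\<close>)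
qed


lemma PSF: "product_sigma_finite Mp"
  unfolding product_sigma_finite_def using Mp_prob prob_space_imp_sigma_finite by blast

definition "m p = integral\<^sup>L (Mp p) (\<lambda>x. x)"

lemma m_01: "0 \<le> m p \<and> m p \<le> 1"
proof -
  interpret prob_space "Mp p" by (rule Mp_prob)
  have "0 \<le> m p" unfolding m_def using Mp_AE[of p] by (intro integral_nonneg_AE) auto
  moreover have "m p \<le> integral\<^sup>L (Mp p) (\<lambda>x. 1)" unfolding m_def
    using Mp_AE[of p] Mp_int[of p] by (intro integral_mono_AE) auto
  ultimately show ?thesis by (simp add: prob_space)
qed

lemma m_arm: "j < N \<Longrightarrow> t \<in> {1..T} \<Longrightarrow> m (j,t) = arm_mean nu j t"
  unfolding m_def Mp_def arm_mean_def Ix_def by simp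

lemma intZ: "integrable (Mp p) (\<lambda>x. x - m p)"
proof -
  interpret prob_space "Mp p" by (rule Mp_prob)
  show ?thesis using Mp_int[of p] by simp
qed

lemma intZ0: "integral\<^sup>L (Mp p) (\<lambda>x. x - m p) = 0"
proof -
  interpret prob_space "Mp p" by (rule Mp_prob)
  show ?thesis using Mp_int[of p] by (simp add: m_def prob_space)
qed

lemma intZ2: "integrable (Mp p) (\<lambda>x. (x - m p)^2) \<and> integral\<^sup>L (Mp p) (\<lambda>x. (x - m p)^2) \<le> 1"
proof -
  interpret prob_space "Mp p" by (rule Mp_prob)
  have ae: "AE x in Mp p. norm ((x - m p)^2) \<le> 1"
    using Mp_AE[of p] m_01[of p]
  proof (elim AE_mp, intro AE_I2 impI)
    fix x :: real assume "0 \<le> x \<and> x \<le> 1"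
    then have "\<bar>x - m p\<bar> \<le> 1" using m_01[of p] by auto
    then show "norm ((x - m p)^2) \<le> 1" by (simp add: abs_square_le_1)
  qed
  have i: "integrable (Mp p) (\<lambda>x. (x - m p)^2)"
    by (rule integrable_const_bound[OF ae]) (simp add: measurable_cong_sets[OF Mp_sets refl])
  have "integral\<^sup>L (Mp p) (\<lambda>x. (x - m p)^2) \<le> integral\<^sup>L (Mp p) (\<lambda>x. 1)"
    using ae i by (intro integral_mono_AE) auto
  then show ?thesis using i by (simp add: prob_space)
qed

lemma prod_two:
  fixes x y :: real
  assumes "finite S" "a \<in> S" "b \<in> S" "a \<noteq> b"
  shows "(\<Prod>c\<in>S. (if c = a then x else if c = b then y else 1)) = x * y"
proof -
  have "(\<Prod>c\<in>S. (if c = a then x else if c = b then y else 1)) = (\<Prod>c\<in>{a,b}. (if c = a then x else if c = b then y else 1))"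
    using assms by (intro prod.mono_neutral_right) auto
  then show ?thesis using assms by simp
qed

lemma prod_one:
  fixes x :: real
  assumes "finite S" "a \<in> S"
  shows "(\<Prod>c\<in>S. (if c = a then x else 1)) = x"
proof -
  have "(\<Prod>c\<in>S. (if c = a then x else 1)) = (\<Prod>c\<in>{a}. (if c = a then x else 1))"
    using assms by (intro prod.mono_neutral_right) auto
  then show ?thesis using assms by simp
qed

lemma cross:
  assumes "a \<in> Ix" "b \<in> Ix" "a \<noteq> b"
  shows "integrable M (\<lambda>\<omega>. (\<omega> a - m a) * (\<omega> b - m b)) \<and> integral\<^sup>L M (\<lambda>\<omega>. (\<omega> a - m a) * (\<omega> b - m b)) = 0"
proof -
  define f where "f c x = (if c = a then x - m a else if c = b then x - m b else (1::real))" for c x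
  have fi: "integrable (Mp c) (f c)" for c
  proof -
    interpret prob_space "Mp c" by (rule Mp_prob)
    show ?thesis unfolding f_def using intZ[of a] intZ[of b] by (cases "c = a"; cases "c = b") auto
  qed
  have eq: "(\<Prod>c\<in>Ix. f c (\<omega> c)) = (\<omega> a - m a) * (\<omega> b - m b)" for \<omega>
    unfolding f_def using prod_two[OF finI assms, of "\<omega> a - m a" "\<omega> b - m b"]
    by (smt (verit) prod.cong)
  have "integrable M (\<lambda>\<omega>. \<Prod>c\<in>Ix. f c (\<omega> c))"
    unfolding M_eq by (rule product_sigma_finite.product_integrable_prod[OF PSF finI fi])
  moreover have "integral\<^sup>L M (\<lambda>\<omega>. \<Prod>c\<in>Ix. f c (\<omega> c)) = (\<Prod>c\<in>Ix. integral\<^sup>L (Mp c) (f c))"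
    unfolding M_eq by (rule product_sigma_finite.product_integral_prod[OF PSF finI fi])
  moreover have "(\<Prod>c\<in>Ix. integral\<^sup>L (Mp c) (f c)) = 0"
    using assms finI intZ0[of a] unfolding f_def by (intro prod_zero bexI[of _ a]) auto
  ultimately show ?thesis unfolding eq by simp
qed

lemma single:
  assumes "a \<in> Ix"
  shows "integrable M (\<lambda>\<omega>. \<omega> a - m a)"
proof -
  define f where "f c x = (if c = a then x - m a else (1::real))" for c x
  have fi: "integrable (Mp c) (f c)" for c
  proof -
    interpret prob_space "Mp c" by (rule Mp_prob)
    show ?thesis unfolding f_def using intZ[of a] by (cases "c = a") auto
  qed
  have eq: "(\<Prod>c\<in>Ix. f c (\<omega> c)) = (\<omega> a - m a)" for \<omega>
    unfolding f_def using prod_one[OF finI assms, of "\<omega> a - m a"]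
    by (smt (verit) prod.cong)
  have "integrable M (\<lambda>\<omega>. \<Prod>c\<in>Ix. f c (\<omega> c))"
    unfolding M_eq by (rule product_sigma_finite.product_integrable_prod[OF PSF finI fi])
  then show ?thesis unfolding eq .
qed

lemma square:
  assumes "a \<in> Ix"
  shows "integrable M (\<lambda>\<omega>. (\<omega> a - m a) * (\<omega> a - m a)) \<and> integral\<^sup>L M (\<lambda>\<omega>. (\<omega> a - m a) * (\<omega> a - m a)) \<le> 1"
proof -
  define f where "f c x = (if c = a then (x - m a)^2 else (1::real))" for c x
  have fi: "integrable (Mp c) (f c)" for c
  proof -
    interpret prob_space "Mp c" by (rule Mp_prob)
    show ?thesis unfolding f_def using intZ2[of a] by (cases "c = a") auto
  qed
  have eq: "(\<Prod>c\<in>Ix. f c (\<omega> c)) = (\<omega> a - m a) * (\<omega> a - m a)" for \<omega>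
    unfolding f_def using prod_one[OF finI assms, of "(\<omega> a - m a)^2"]
    by (smt (verit) prod.cong power2_eq_square)
  have "integrable M (\<lambda>\<omega>. \<Prod>c\<in>Ix. f c (\<omega> c))"
    unfolding M_eq by (rule product_sigma_finite.product_integrable_prod[OF PSF finI fi])
  moreover have "integral\<^sup>L M (\<lambda>\<omega>. \<Prod>c\<in>Ix. f c (\<omega> c)) = (\<Prod>c\<in>Ix. integral\<^sup>L (Mp c) (f c))"
    unfolding M_eq by (rule product_sigma_finite.product_integral_prod[OF PSF finI fi])
  moreover have "(\<Prod>c\<in>Ix. integral\<^sup>L (Mp c) (f c)) = integral\<^sup>L (Mp a) (f a)"
  proof -
    have "(\<Prod>c\<in>Ix. integral\<^sup>L (Mp c) (f c)) = (\<Prod>c\<in>Ix. (if c = a then integral\<^sup>L (Mp a) (f a) else 1))"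
    proof (rule prod.cong[OF refl])
      fix c assume "c \<in> Ix"
      interpret prob_space "Mp c" by (rule Mp_prob)
      show "integral\<^sup>L (Mp c) (f c) = (if c = a then integral\<^sup>L (Mp a) (f a) else 1)"
        unfolding f_def by (auto simp: prob_space)
    qed
    then show ?thesis using prod_one[OF finI assms] by simp
  qed
  moreover have "integral\<^sup>L (Mp a) (f a) \<le> 1" using intZ2[of a] unfolding f_def by simp
  ultimately show ?thesis unfolding eq by simp
qed

end


context bandit begin

lemma sumZ:
  fixes g :: "nat \<Rightarrow> nat \<times> nat" and L :: nat
  assumes inj: "inj_on g {..<L}" and sub: "g ` {..<L} \<subseteq> Ix"
  defines "S \<equiv> (\<lambda>\<omega>. \<Sum>i<L. (\<omega> (g i) - m (g i)))"
  shows "integrable M S" "integrable M (\<lambda>\<omega>. \<bar>S \<omega>\<bar>)" "integral\<^sup>L M (\<lambda>\<omega>. \<bar>S \<omega>\<bar>) \<le> sqrt L"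
proof -
  interpret P: prob_space M by (rule M_prob)
  have gI: "i < L \<Longrightarrow> g i \<in> Ix" for i using sub by auto
  show iS: "integrable M S" unfolding S_def using single gI by (intro Bochner_Integration.integrable_sum) auto
  then show iA: "integrable M (\<lambda>\<omega>. \<bar>S \<omega>\<bar>)" by (rule integrable_abs)
  define P where "P i i' \<omega> = (\<omega> (g i) - m (g i)) * (\<omega> (g i') - m (g i'))" for i i' \<omega>
  have sq: "S \<omega> ^ 2 = (\<Sum>i<L. \<Sum>i'<L. P i i' \<omega>)" for \<omega>
    unfolding S_def P_def power2_eq_square sum_product by simp
  have Pint: "integrable M (P i i')" if "i < L" "i' < L" for i i'
  proof (cases "i = i'")
    case True then show ?thesis unfolding P_def using square[OF gI[OF that(1)]] by simp
  next
    case False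
    then have "g i \<noteq> g i'" using inj that by (auto dest: inj_onD)
    then show ?thesis unfolding P_def using cross[OF gI[OF that(1)] gI[OF that(2)]] by simp
  qed
  have Pval: "integral\<^sup>L M (P i i') \<le> (if i = i' then 1 else 0)" if "i < L" "i' < L" for i i'
  proof (cases "i = i'")
    case True then show ?thesis unfolding P_def using square[OF gI[OF that(1)]] by simp
  next
    case False
    then have "g i \<noteq> g i'" using inj that by (auto dest: inj_onD)
    then show ?thesis unfolding P_def using cross[OF gI[OF that(1)] gI[OF that(2)]] False by simp
  qed
  have iS2: "integrable M (\<lambda>\<omega>. S \<omega> ^ 2)" unfolding sq using Pint by (intro Bochner_Integration.integrable_sum) auto
  have "integral\<^sup>L M (\<lambda>\<omega>. S \<omega> ^ 2) = (\<Sum>i<L. \<Sum>i'<L. integral\<^sup>L M (P i i'))"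
  proof -
    have "integral\<^sup>L M (\<lambda>\<omega>. \<Sum>i<L. \<Sum>i'<L. P i i' \<omega>) = (\<Sum>i<L. integral\<^sup>L M (\<lambda>\<omega>. \<Sum>i'<L. P i i' \<omega>))"
      using Pint by (intro Bochner_Integration.integral_sum Bochner_Integration.integrable_sum) auto
    also have "\<dots> = (\<Sum>i<L. \<Sum>i'<L. integral\<^sup>L M (P i i'))"
      using Pint by (intro sum.cong refl Bochner_Integration.integral_sum) auto
    finally show ?thesis unfolding sq .
  qed
  also have "\<dots> \<le> (\<Sum>i<L. \<Sum>i'<L. (if i = i' then 1 else 0))"
    using Pval by (intro sum_mono) auto
  also have "\<dots> = L" by simp
  finally have S2: "integral\<^sup>L M (\<lambda>\<omega>. S \<omega> ^ 2) \<le> L" .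
  show "integral\<^sup>L M (\<lambda>\<omega>. \<bar>S \<omega>\<bar>) \<le> sqrt L"
  proof (cases "L = 0")
    case True then show ?thesis unfolding S_def by simp
  next
    case False
    define r where "r = sqrt (real L)"
    have r: "r > 0" "r * r = L" using False unfolding r_def by auto
    have pw: "\<bar>S \<omega>\<bar> \<le> S \<omega> ^ 2 / (2 * r) + r / 2" for \<omega>
    proof -
      have "0 \<le> (\<bar>S \<omega>\<bar> - r)^2" by simp
      then have "2 * r * \<bar>S \<omega>\<bar> \<le> S \<omega> ^ 2 + r * r" by (simp add: power2_eq_square algebra_simps)
      then show ?thesis using r by (simp add: field_simps)
    qed
    have "integral\<^sup>L M (\<lambda>\<omega>. \<bar>S \<omega>\<bar>) \<le> integral\<^sup>L M (\<lambda>\<omega>. S \<omega> ^ 2 / (2 * r) + r / 2)"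
      using iA iS2 pw by (intro integral_mono) auto
    also have "\<dots> = integral\<^sup>L M (\<lambda>\<omega>. S \<omega> ^ 2) / (2 * r) + r / 2"
      using iS2 by (simp add: P.prob_space)
    also have "\<dots> \<le> L / (2 * r) + r / 2"
      using S2 r by (simp add: divide_right_mono)
    also have "\<dots> = r" using r by (simp add: field_simps)
    finally show ?thesis unfolding r_def .
  qed
qed

end


locale alg = bandit +
  fixes \<rho> l eps :: real and \<gamma> :: "nat \<Rightarrow> real"
  assumes l_pos: "l > 0" and N1: "N \<ge> 1" and eps0: "eps \<ge> 0"
    and sv: "slowly_varying N T nu eps"
begin

abbreviation "E k \<equiv> epoch_len 1 \<rho> l k"
abbreviation "Lk k \<equiv> expl_len 1 \<rho> \<gamma> l k"
abbreviation "s k \<equiv> epoch_start 1 \<rho> l k"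
abbreviation "mu j t \<equiv> arm_mean nu j t"
abbreviation "pol \<equiv> lmdsee N 1 1 \<rho> \<gamma> l"

lemma E_pos: "k \<ge> 1 \<Longrightarrow> E k \<ge> 1"
proof -
  assume "k \<ge> 1"
  then have "real k powr \<rho> > 0" by simp
  then have "1 * real k powr \<rho> * l > 0" using l_pos by simp
  then show ?thesis unfolding epoch_len_def by linarith
qed

lemma s_Suc: "k \<ge> 1 \<Longrightarrow> s (Suc k) = s k + E k"
  unfolding epoch_start_def by simp

lemma s_1: "s 1 = 1" unfolding epoch_start_def by simp

lemma s_ge: "k \<ge> 1 \<Longrightarrow> s k \<ge> k"
proof (induction k rule: dec_induct)
  case base then show ?case using s_1 by simp
next
  case (step n) then show ?case using s_Suc[of n] E_pos[of n] by simp
qed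

lemma s_mono: assumes "1 \<le> k" "k \<le> k'" shows "s k \<le> s k'"
  using assms(2)
proof (induction k' rule: dec_induct)
  case base then show ?case by simp
next
  case (step n) then show ?case using s_Suc[of n] assms(1) by simp
qed

lemma epoch_of_props:
  assumes "t \<ge> 1"
  shows "1 \<le> epoch_of 1 \<rho> l t \<and> s (epoch_of 1 \<rho> l t) \<le> t \<and> t < s (Suc (epoch_of 1 \<rho> l t))"
proof -
  let ?P = "\<lambda>k. 1 \<le> k \<and> t < s (Suc k)"
  have ex: "?P t" using s_ge[of "Suc t"] assms by simp
  have P: "?P (epoch_of 1 \<rho> l t)" unfolding epoch_of_def by (rule LeastI[of ?P, OF ex])
  define k where "k = epoch_of 1 \<rho> l t"
  have "s k \<le> t"
  proof (cases "k = 1")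
    case True then show ?thesis using s_1 assms by simp
  next
    case False
    then have k2: "k - 1 \<ge> 1" "k - 1 < k" using P unfolding k_def by auto
    have "\<not> ?P (k - 1)" using not_less_Least[of "k - 1" ?P] k2(2) unfolding k_def epoch_of_def by blast
    then show ?thesis using k2 by (simp add: Suc_diff_1 not_less)
  qed
  then show ?thesis using P unfolding k_def by simp
qed

lemma epoch_of_eq:
  assumes "1 \<le> k" "s k \<le> t" "t < s (Suc k)"
  shows "epoch_of 1 \<rho> l t = k"
  unfolding epoch_of_def
proof (rule Least_equality)
  show "1 \<le> k \<and> t < s (Suc k)" using assms by simp
next
  fix k' assume k': "1 \<le> k' \<and> t < s (Suc k')"
  show "k \<le> k'"
  proof (rule ccontr)
    assume "\<not> k \<le> k'"
    then have "s (Suc k') \<le> s k" using k' by (intro s_mono) auto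
    then show False using k' assms by simp
  qed
qed

lemma drift:
  assumes j: "j < N" and t: "t \<in> {1..T}" and \<tau>: "\<tau> \<in> {1..T}"
  shows "\<bar>mu j \<tau> - mu j t\<bar> \<le> eps * \<bar>real \<tau> - real t\<bar>"
proof -
  have up: "\<bar>mu j (a + d) - mu j a\<bar> \<le> eps * d" if "a \<ge> 1" "a + d \<le> T" for a d
    using that
  proof (induction d)
    case 0 then show ?case by simp
  next
    case (Suc d)
    have "\<bar>mu j (Suc (a + d)) - mu j (a + d)\<bar> \<le> eps"
      using sv j Suc.prems unfolding slowly_varying_def by auto
    then show ?case using Suc by (simp add: algebra_simps)
  qed
  show ?thesis
  proof (cases "t \<le> \<tau>")
    case True
    then show ?thesis using up[of t "\<tau> - t"] t \<tau> by (simp add: of_nat_diff)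
  next
    case False
    then show ?thesis using up[of \<tau> "t - \<tau>"] t \<tau> by (simp add: of_nat_diff abs_minus_commute)
  qed
qed

lemma mu_01: "j < N \<Longrightarrow> t \<in> {1..T} \<Longrightarrow> 0 \<le> mu j t \<and> mu j t \<le> 1"
  using m_01[of "(j,t)"] m_arm[of j t] by simp

lemma exploit_arm_props:
  "exploit_arm N 1 1 \<rho> \<gamma> l \<omega> k < N \<and>
   (\<forall>j'<N. expl_mean 1 1 \<rho> \<gamma> l \<omega> k j' \<le> expl_mean 1 1 \<rho> \<gamma> l \<omega> k (exploit_arm N 1 1 \<rho> \<gamma> l \<omega> k))"
proof -
  let ?f = "\<lambda>j. expl_mean 1 1 \<rho> \<gamma> l \<omega> k j"
  have "0 \<in> {..<N}" using N1 by simp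
  then have fin: "finite (?f ` {..<N})" "?f ` {..<N} \<noteq> {}" by auto
  obtain j where j: "j < N" "?f j = Max (?f ` {..<N})"
    using Max_in[OF fin] by auto
  have "j < N \<and> (\<forall>j'<N. ?f j' \<le> ?f j)" using j fin by auto
  then show ?thesis unfolding exploit_arm_def by (rule LeastI)
qed

lemma pol_lt: "t \<ge> 1 \<Longrightarrow> pol \<omega> t < N"
proof -
  assume "t \<ge> 1"
  define k where "k = epoch_of 1 \<rho> l t"
  define L where "L = Lk k"
  show ?thesis
  proof (cases "t - s k < N * L")
    case True
    then have "L > 0" by (cases "L = 0") auto
    then have "(t - s k) div L < N" using True by (simp add: div_less_iff_less_mult mult.commute)
    then show ?thesis using True unfolding lmdsee_def k_def L_def Let_def by simp
  next
    case False
    then show ?thesis using exploit_arm_props unfolding lmdsee_def k_def L_def Let_def by simp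
  qed
qed

end


context alg begin

definition "Mx t = Max ((\<lambda>j. mu j t) ` {..<N})"
definition "rt t = integral\<^sup>L M (\<lambda>\<omega>. Mx t - mu (pol \<omega> t) t)"

lemma Mx_props: "t \<in> {1..T} \<Longrightarrow> (\<forall>j<N. mu j t \<le> Mx t) \<and> Mx t \<le> 1 \<and> (\<exists>b<N. mu b t = Mx t)"
proof -
  assume t: "t \<in> {1..T}"
  have "0 \<in> {..<N}" using N1 by simp
  then have fin: "finite ((\<lambda>j. mu j t) ` {..<N})" "(\<lambda>j. mu j t) ` {..<N} \<noteq> {}" by auto
  obtain b where b: "b < N" "mu b t = Mx t" using Max_in[OF fin] unfolding Mx_def by auto
  have "\<forall>j<N. mu j t \<le> Mx t" unfolding Mx_def using fin by auto
  moreover have "Mx t \<le> 1" using b mu_01[OF b(1) t] by simp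
  ultimately show ?thesis using b by blast
qed

lemma step_le1: "t \<in> {1..T} \<Longrightarrow> rt t \<le> 1"
proof -
  assume t: "t \<in> {1..T}"
  interpret P: prob_space M by (rule M_prob)
  have "rt t \<le> integral\<^sup>L M (\<lambda>\<omega>. 1)" unfolding rt_def
  proof (rule int_le_helper)
    fix \<omega>
    have "pol \<omega> t < N" using pol_lt t by simp
    then show "Mx t - mu (pol \<omega> t) t \<le> 1" using mu_01[of "pol \<omega> t" t] Mx_props[OF t] t by auto
  qed auto
  then show ?thesis by (simp add: P.prob_space)
qed

lemma step_exploit:
  assumes t: "t \<in> {1..T}" and k: "k = epoch_of 1 \<rho> l t" and L: "L = Lk k" "L \<ge> 1"
    and ex: "N * L \<le> t - s k"
  shows "rt t \<le> 2 * N / sqrt L + 2 * eps * E k"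
proof -
  interpret P: prob_space M by (rule M_prob)
  have ep: "1 \<le> k" "s k \<le> t" "t < s (Suc k)" using epoch_of_props[of t] t k by auto
  have sS: "s (Suc k) = s k + E k" using s_Suc ep by simp
  have s1: "s k \<ge> 1" using s_ge[of k] ep by simp
  define \<tau> where "\<tau> j i = s k + j * L + i" for j i
  define S where "S j \<omega> = (\<Sum>i<L. (\<omega> (j, \<tau> j i) - m (j, \<tau> j i)))" for j \<omega>
  have \<tau>_lt: "\<tau> j i < t" if "j < N" "i < L" for j i
  proof -
    have "j * L + i < N * L"
    proof -
      have "j * L + i < j * L + L" using that by simp
      also have "\<dots> = Suc j * L" by simp
      also have "\<dots> \<le> N * L" using that by (intro mult_right_mono) auto
      finally show ?thesis .
    qed
    then show ?thesis unfolding \<tau>_def using ex ep by linarith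
  qed
  have \<tau>_T: "\<tau> j i \<in> {1..T}" if "j < N" "i < L" for j i
    using \<tau>_lt[OF that] t s1 unfolding \<tau>_def by auto
  have \<tau>_d: "\<bar>real (\<tau> j i) - real t\<bar> \<le> E k" if "j < N" "i < L" for j i
  proof -
    have "s k \<le> \<tau> j i" unfolding \<tau>_def by simp
    then show ?thesis using \<tau>_lt[OF that] ep sS by linarith
  qed
  have Sfacts: "integrable M (\<lambda>\<omega>. \<bar>S j \<omega>\<bar>) \<and> integral\<^sup>L M (\<lambda>\<omega>. \<bar>S j \<omega>\<bar>) \<le> sqrt L" if j: "j < N" for j
  proof -
    have inj: "inj_on (\<lambda>i. (j, \<tau> j i)) {..<L}" unfolding \<tau>_def by (auto intro: inj_onI)
    have sub: "(\<lambda>i. (j, \<tau> j i)) ` {..<L} \<subseteq> Ix" using \<tau>_T j unfolding Ix_def by auto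
    show ?thesis using sumZ(2,3)[OF inj sub] unfolding S_def by simp
  qed
  define \<nu> where "\<nu> j = (\<Sum>i<L. mu j (\<tau> j i)) / L" for j
  have hat: "expl_mean 1 1 \<rho> \<gamma> l \<omega> k j = \<nu> j + S j \<omega> / L" if "j < N" for j \<omega>
  proof -
    have "S j \<omega> = (\<Sum>i<L. \<omega> (j, \<tau> j i)) - (\<Sum>i<L. mu j (\<tau> j i))"
      unfolding S_def using m_arm[OF that \<tau>_T[OF that]] by (simp add: sum_subtractf)
    then show ?thesis unfolding expl_mean_def \<nu>_def Let_def L(1)[symmetric] \<tau>_def
      using L(2) by (simp add: field_simps)
  qed
  have \<nu>_close: "\<bar>\<nu> j - mu j t\<bar> \<le> eps * E k" if j: "j < N" for j
  proof -
    have "\<nu> j - mu j t = (\<Sum>i<L. (mu j (\<tau> j i) - mu j t)) / L"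
      unfolding \<nu>_def using L(2) by (simp add: sum_subtractf field_simps)
    also have "\<bar>\<dots>\<bar> \<le> (\<Sum>i<L. eps * E k) / L"
    proof -
      have "\<bar>\<Sum>i<L. (mu j (\<tau> j i) - mu j t)\<bar> \<le> (\<Sum>i<L. \<bar>mu j (\<tau> j i) - mu j t\<bar>)" by (rule sum_abs)
      also have "\<dots> \<le> (\<Sum>i<L. eps * E k)"
      proof (rule sum_mono)
        fix i assume "i \<in> {..<L}"
        then have i: "i < L" by simp
        have "\<bar>mu j (\<tau> j i) - mu j t\<bar> \<le> eps * \<bar>real (\<tau> j i) - real t\<bar>" using drift[OF j t \<tau>_T[OF j i]] .
        also have "\<dots> \<le> eps * E k" using \<tau>_d[OF j i] eps0 by (intro mult_left_mono) auto
        finally show "\<bar>mu j (\<tau> j i) - mu j t\<bar> \<le> eps * E k" .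
      qed
      finally show ?thesis using L(2) by (simp add: pos_divide_le_eq algebra_simps)
    qed
    also have "\<dots> = eps * E k" using L(2) by simp
    finally show ?thesis .
  qed
  have pw: "Mx t - mu (pol \<omega> t) t \<le> 2 * (\<Sum>j<N. \<bar>S j \<omega>\<bar>) / L + 2 * eps * E k" for \<omega>
  proof -
    define J where "J = exploit_arm N 1 1 \<rho> \<gamma> l \<omega> k"
    have polJ: "pol \<omega> t = J"
      unfolding lmdsee_def J_def Let_def using ex by (simp add: k[symmetric] L(1)[symmetric])
    have J: "J < N" "expl_mean 1 1 \<rho> \<gamma> l \<omega> k b \<le> expl_mean 1 1 \<rho> \<gamma> l \<omega> k J" if "b < N" for b
      using exploit_arm_props that unfolding J_def by auto
    obtain b where b: "b < N" "mu b t = Mx t" using Mx_props[OF t] by blast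
    have Jn: "J < N" using J(1) b(1) by blast
    have "Mx t - mu J t \<le> (\<nu> b + eps * E k) - (\<nu> J - eps * E k)"
      using \<nu>_close[OF b(1)] \<nu>_close[OF Jn] b(2) by linarith
    also have "\<dots> = expl_mean 1 1 \<rho> \<gamma> l \<omega> k b - expl_mean 1 1 \<rho> \<gamma> l \<omega> k J - S b \<omega> / L + S J \<omega> / L + 2 * eps * E k"
      using hat[OF b(1)] hat[OF Jn] by simp
    also have "\<dots> \<le> \<bar>S b \<omega>\<bar> / L + \<bar>S J \<omega>\<bar> / L + 2 * eps * E k"
    proof -
      have "S J \<omega> / L \<le> \<bar>S J \<omega>\<bar> / L" using L(2) by (intro divide_right_mono) auto
      moreover have "- S b \<omega> / L \<le> \<bar>S b \<omega>\<bar> / L" using L(2) by (intro divide_right_mono) auto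
      ultimately show ?thesis using J(2)[OF b(1)] by simp
    qed
    also have "\<dots> \<le> 2 * (\<Sum>j<N. \<bar>S j \<omega>\<bar>) / L + 2 * eps * E k"
    proof -
      have "\<bar>S b \<omega>\<bar> \<le> (\<Sum>j<N. \<bar>S j \<omega>\<bar>)" using b(1) by (intro member_le_sum) auto
      moreover have "\<bar>S J \<omega>\<bar> \<le> (\<Sum>j<N. \<bar>S j \<omega>\<bar>)" using Jn by (intro member_le_sum) auto
      ultimately have "\<bar>S b \<omega>\<bar> + \<bar>S J \<omega>\<bar> \<le> 2 * (\<Sum>j<N. \<bar>S j \<omega>\<bar>)" by simp
      then show ?thesis using L(2) by (simp add: add_divide_distrib[symmetric] divide_right_mono)
    qed
    finally show ?thesis using polJ by simp
  qed
  have ig: "integrable M (\<lambda>\<omega>. 2 * (\<Sum>j<N. \<bar>S j \<omega>\<bar>) / L + 2 * eps * E k)"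
    using Sfacts by (intro Bochner_Integration.integrable_add Bochner_Integration.integrable_divide
        Bochner_Integration.integrable_mult_right Bochner_Integration.integrable_sum) auto
  have "rt t \<le> integral\<^sup>L M (\<lambda>\<omega>. 2 * (\<Sum>j<N. \<bar>S j \<omega>\<bar>) / L + 2 * eps * E k)"
    unfolding rt_def
  proof (rule int_le_helper[OF ig])
    fix \<omega> show "0 \<le> 2 * (\<Sum>j<N. \<bar>S j \<omega>\<bar>) / L + 2 * eps * E k" using eps0 by simp
  qed (rule pw)
  also have "\<dots> = 2 * (\<Sum>j<N. integral\<^sup>L M (\<lambda>\<omega>. \<bar>S j \<omega>\<bar>)) / L + 2 * eps * E k"
  proof -
    have i1: "integrable M (\<lambda>\<omega>. \<Sum>j<N. \<bar>S j \<omega>\<bar>)"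
      using Sfacts by (intro Bochner_Integration.integrable_sum) auto
    have e1: "integral\<^sup>L M (\<lambda>\<omega>. \<Sum>j<N. \<bar>S j \<omega>\<bar>) = (\<Sum>j<N. integral\<^sup>L M (\<lambda>\<omega>. \<bar>S j \<omega>\<bar>))"
      using Sfacts by (intro Bochner_Integration.integral_sum) auto
    have i2: "integrable M (\<lambda>\<omega>. 2 * (\<Sum>j<N. \<bar>S j \<omega>\<bar>) / L)"
      by (intro Bochner_Integration.integrable_divide Bochner_Integration.integrable_mult_right i1)
    have "integral\<^sup>L M (\<lambda>\<omega>. 2 * (\<Sum>j<N. \<bar>S j \<omega>\<bar>) / L + 2 * eps * E k)
       = integral\<^sup>L M (\<lambda>\<omega>. 2 * (\<Sum>j<N. \<bar>S j \<omega>\<bar>) / L) + integral\<^sup>L M (\<lambda>\<omega>. 2 * eps * E k)"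
      by (rule Bochner_Integration.integral_add[OF i2 P.integrable_const])
    also have "integral\<^sup>L M (\<lambda>\<omega>. 2 * eps * E k) = 2 * eps * E k"
      by (simp add: P.prob_space)
    also have "integral\<^sup>L M (\<lambda>\<omega>. 2 * (\<Sum>j<N. \<bar>S j \<omega>\<bar>) / L) = 2 * integral\<^sup>L M (\<lambda>\<omega>. \<Sum>j<N. \<bar>S j \<omega>\<bar>) / L"
      by (simp only: integral_divide_zero integral_mult_right_zero)
    finally show ?thesis unfolding e1 .
  qed
  also have "\<dots> \<le> 2 * (\<Sum>j<N. sqrt L) / L + 2 * eps * E k"
  proof -
    have "(\<Sum>j<N. integral\<^sup>L M (\<lambda>\<omega>. \<bar>S j \<omega>\<bar>)) \<le> (\<Sum>j<N. sqrt L)"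
      using Sfacts by (intro sum_mono) auto
    then show ?thesis using L(2) by (simp add: divide_right_mono)
  qed
  also have "\<dots> = 2 * N / sqrt L + 2 * eps * E k"
  proof -
    have sq: "real L = sqrt L * sqrt L" by simp
    have pos: "sqrt (real L) > 0" using L(2) by simp
    have q: "sqrt (real L) / L = 1 / sqrt L" using pos by (subst sq) (simp add: field_simps)
    have "2 * (\<Sum>j<N. sqrt (real L)) / L = 2 * N * (sqrt L / L)" by simp
    also have "\<dots> = 2 * N / sqrt L" using q by simp
    finally show ?thesis by simp
  qed
  finally show ?thesis .
qed

end


lemma count_le: "(\<Sum>m<E. (if m < c then (1::real) else 0)) \<le> real (min E c)"
proof (induction E)
  case 0 then show ?case by simp
next
  case (Suc E) then show ?case by (cases "E < c") (auto simp: min_def split: if_splits)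
qed

lemma sum_shift: fixes a n :: nat shows "(\<Sum>t\<in>{a..<a + n}. f t) = (\<Sum>m<n. f (a + m))"
proof (induction n)
  case 0 then show ?case by simp
next
  case (Suc n)
  have "{a..<a + Suc n} = insert (a + n) {a..<a + n}" by auto
  then show ?case using Suc by (simp add: add.commute)
qed

context alg begin

definition "D k = (if Lk k = 0 then 1 else 2 * real N / sqrt (Lk k) + 2 * eps * E k)"
definition "B k = N * Lk k + E k * D k"

lemma D_nonneg: "D k \<ge> 0" unfolding D_def using eps0 by simp

lemma regret_eq: "regret N T nu pol = (\<Sum>t\<in>{1..T}. rt t)"
  unfolding regret_def rt_def Mx_def by simp

lemma epoch_split: "(\<Sum>t\<in>{1..<s (Suc n)}. f t) = (\<Sum>k\<in>{1..n}. \<Sum>t\<in>{s k..<s (Suc k)}. f t)"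
proof (induction n)
  case 0 then show ?case using s_1 by simp
next
  case (Suc n)
  have le: "1 \<le> s (Suc n)" "s (Suc n) \<le> s (Suc (Suc n))" using s_ge[of "Suc n"] s_Suc[of "Suc n"] by auto
  have "(\<Sum>t\<in>{1..<s (Suc (Suc n))}. f t) = (\<Sum>t\<in>{1..<s (Suc n)}. f t) + (\<Sum>t\<in>{s (Suc n)..<s (Suc (Suc n))}. f t)"
    using le by (simp add: sum.atLeastLessThan_concat)
  then show ?case using Suc by simp
qed

lemma epoch_bound:
  assumes k: "k \<ge> 1"
  shows "(\<Sum>t\<in>{s k..<s (Suc k)}. (if t \<le> T then rt t else 0)) \<le> B k"
proof -
  define L where "L = Lk k"
  have trm: "(if s k + m \<le> T then rt (s k + m) else 0) \<le> (if m < N * L then 1 else D k)" if m: "m < E k" for m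
  proof (cases "s k + m \<le> T")
    case False then show ?thesis using D_nonneg by simp
  next
    case Tle: True
    define t where "t = s k + m"
    have tT: "t \<in> {1..T}" using Tle s_ge[of k] k unfolding t_def by auto
    have eo: "epoch_of 1 \<rho> l t = k" using k m s_Suc[OF k] unfolding t_def by (intro epoch_of_eq) auto
    have tm: "t - s k = m" unfolding t_def by simp
    show ?thesis
    proof (cases "m < N * L")
      case True then show ?thesis using step_le1[OF tT] Tle unfolding t_def by simp
    next
      case False
      show ?thesis
      proof (cases "L = 0")
        case True then show ?thesis using step_le1[OF tT] False Tle unfolding t_def D_def L_def by simp
      next
        case L0: False
        have "rt t \<le> 2 * N / sqrt L + 2 * eps * E k"
          using step_exploit[OF tT eo[symmetric] L_def, of] L0 False tm by simp
        then show ?thesis using False L0 Tle unfolding t_def D_def L_def by simp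
      qed
    qed
  qed
  have "(\<Sum>t\<in>{s k..<s (Suc k)}. (if t \<le> T then rt t else 0)) = (\<Sum>m<E k. (if s k + m \<le> T then rt (s k + m) else 0))"
    using s_Suc[OF k] sum_shift[of "\<lambda>t. if t \<le> T then rt t else 0" "s k" "E k"] by simp
  also have "\<dots> \<le> (\<Sum>m<E k. (if m < N * L then 1 else D k))"
    using trm by (intro sum_mono) auto
  also have "\<dots> \<le> (\<Sum>m<E k. ((if m < N * L then 1 else 0) + D k))"
    using D_nonneg by (intro sum_mono) auto
  also have "\<dots> = (\<Sum>m<E k. (if m < N * L then (1::real) else 0)) + E k * D k"
    by (simp add: sum.distrib)
  also have "\<dots> \<le> real (min (E k) (N * L)) + E k * D k" using count_le by simp
  also have "\<dots> \<le> B k" unfolding B_def L_def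
    using of_nat_mono[OF min.cobounded2[of "E k" "N * Lk k"], where 'a=real] by simp
  finally show ?thesis .
qed

lemma regret_le:
  assumes T1: "T \<ge> 1"
  shows "regret N T nu pol \<le> (\<Sum>k\<in>{1..epoch_of 1 \<rho> l T}. B k)"
proof -
  define K where "K = epoch_of 1 \<rho> l T"
  have KP: "1 \<le> K" "T < s (Suc K)" using epoch_of_props[OF T1] unfolding K_def by auto
  define h where "h t = (if t \<le> T then rt t else 0)" for t
  have "regret N T nu pol = (\<Sum>t\<in>{1..<s (Suc K)}. h t)"
    unfolding regret_eq
    by (rule sum.mono_neutral_cong_right[symmetric]) (use KP in \<open>auto simp: h_def\<close>)
  also have "\<dots> = (\<Sum>k\<in>{1..K}. \<Sum>t\<in>{s k..<s (Suc k)}. h t)" by (rule epoch_split)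
  also have "\<dots> \<le> (\<Sum>k\<in>{1..K}. B k)" unfolding h_def using epoch_bound by (intro sum_mono) auto
  finally show ?thesis unfolding K_def .
qed

end


lemma Bx:
  fixes x eps :: real and N L E :: nat
  assumes x: "x \<ge> exp 1" and eps: "eps \<ge> 0"
    and L: "L = nat \<lceil>2 * x powr (2/3) * ln x\<rceil>" and E: "E = nat \<lceil>x\<rceil>"
  shows "N * L + E * (if L = 0 then 1 else 2 * N / sqrt L + 2 * eps * E) \<le> N * x powr (2/3) * (2 * ln x + 5) + 8 * eps * x^2"
proof -
  have x1: "x \<ge> 1" using x exp_ge_add_one_self[of 1] by simp
  have x0: "x > 0" using x1 by simp
  have lnx: "ln x \<ge> 1" using x x0 by (metis ln_exp ln_le_cancel_iff exp_gt_zero)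
  define y where "y = x powr (1/3)"
  have y0: "y > 0" unfolding y_def using x0 by simp
  have y1: "y \<ge> 1" unfolding y_def using x1 by (simp add: ge_one_powr_ge_zero)
  have y2: "x powr (2/3) = y * y" unfolding y_def using x0 by (simp add: powr_add[symmetric])
  have y3: "x = y * (y * y)" unfolding y_def using x0 by (simp add: powr_add[symmetric])
  have Llo: "real L \<ge> 2 * (y * y)"
  proof -
    have "2 * x powr (2/3) * ln x \<ge> 2 * x powr (2/3) * 1" using lnx x0 by (intro mult_left_mono) auto
    then show ?thesis unfolding L y2 by linarith
  qed
  have Lhi: "real L \<le> 2 * (y * y) * ln x + 1"
  proof -
    have "2 * x powr (2/3) * ln x \<ge> 0" using lnx x0 x1 by (simp add: zero_le_mult_iff)
    then show ?thesis unfolding L y2 by linarith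
  qed
  have yy1: "y * y \<ge> 1" using y1 by (simp add: mult_ge1_I)
  have L0: "L \<noteq> 0" using Llo yy1 by (intro notI) simp
  have Ehi: "real E \<le> 2 * x" unfolding E using x1 by linarith
  have E0: "real E \<ge> 0" by simp
  have sq: "sqrt L \<ge> y"
  proof -
    have "y * y \<le> L" using Llo yy1 by linarith
    then have "sqrt (y * y) \<le> sqrt L" by (rule real_sqrt_le_mono)
    then show ?thesis using y0 by simp
  qed
  have t1: "E * (2 * N / sqrt L) \<le> 4 * N * (y * y)"
  proof -
    have sp: "sqrt L * y > 0" using sq y0 L0 by (intro mult_pos_pos) auto
    have "2 * N / sqrt L \<le> 2 * N / y" using sq y0 sp by (intro divide_left_mono) auto
    then have "E * (2 * N / sqrt L) \<le> (2 * x) * (2 * N / y)"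
      using Ehi E0 y0 by (intro mult_mono) auto
    also have "\<dots> = 4 * N * (y * y)" using y0 unfolding y3 by (simp add: field_simps)
    finally show ?thesis .
  qed
  have t2: "E * (2 * eps * E) \<le> 8 * eps * x^2"
  proof -
    have "real E * real E \<le> (2 * x) * (2 * x)" using Ehi E0 by (intro mult_mono) auto
    then have "2 * eps * (E * E) \<le> 2 * eps * ((2 * x) * (2 * x))" using eps by (intro mult_left_mono) auto
    then show ?thesis by (simp add: power2_eq_square algebra_simps)
  qed
  have t3: "N * L \<le> N * (y * y) * (2 * ln x) + N * (y * y)"
  proof -
    have "2 * (y * y) * ln x = (y * y) * (2 * ln x)" by simp
    then have "real L \<le> (y * y) * (2 * ln x) + (y * y)" using Lhi yy1 by linarith
    then have "real N * L \<le> N * ((y * y) * (2 * ln x) + (y * y))" by (intro mult_left_mono) auto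
    then show ?thesis by (simp add: algebra_simps)
  qed
  have "N * L + E * (if L = 0 then 1 else 2 * N / sqrt L + 2 * eps * E) = N * L + E * (2 * N / sqrt L) + E * (2 * eps * E)"
    using L0 by (simp add: algebra_simps)
  also have "\<dots> \<le> N * (y * y) * (2 * ln x) + N * (y * y) + 4 * N * (y * y) + 8 * eps * x^2"
    using t1 t2 t3 by linarith
  also have "\<dots> = N * x powr (2/3) * (2 * ln x + 5) + 8 * eps * x^2" unfolding y2 by (simp add: algebra_simps)
  finally show ?thesis .
qed

lemma half_sum:
  fixes \<rho> :: real and n :: nat
  assumes "\<rho> \<ge> 0"
  shows "(real n / 2) powr (\<rho> + 1) \<le> (\<Sum>i\<in>{1..n}. real i powr \<rho>)"
proof (cases "n = 0")
  case True then show ?thesis by simp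
next
  case False
  define h where "h = n div 2"
  have sub: "{h+1..n} \<subseteq> {1..n}" by auto
  have c: "real (card {h+1..n}) \<ge> real n / 2" unfolding h_def by simp
  have lo: "real i powr \<rho> \<ge> (real n / 2) powr \<rho>" if "i \<in> {h+1..n}" for i
  proof -
    have "real n / 2 \<le> real i" using that unfolding h_def by simp linarith
    then show ?thesis using assms by (intro powr_mono2) auto
  qed
  have "(real n / 2) powr (\<rho> + 1) = (real n / 2) * (real n / 2) powr \<rho>"
    using False by (simp add: powr_add)
  also have "\<dots> \<le> real (card {h+1..n}) * (real n / 2) powr \<rho>"
    using c by (intro mult_right_mono) auto
  also have "\<dots> = (\<Sum>i\<in>{h+1..n}. (real n / 2) powr \<rho>)" by simp
  also have "\<dots> \<le> (\<Sum>i\<in>{h+1..n}. real i powr \<rho>)" using lo by (intro sum_mono) auto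
  also have "\<dots> \<le> (\<Sum>i\<in>{1..n}. real i powr \<rho>)" using sub by (intro sum_mono2) auto
  finally show ?thesis .
qed



lemma nat_ceil_le: "real (nat \<lceil>y\<rceil>) \<le> max 0 y + 1"
proof (cases "\<lceil>y\<rceil> \<le> 0")
  case True then have "nat \<lceil>y\<rceil> = 0" by simp
  then show ?thesis by simp
next
  case False
  then have "real (nat \<lceil>y\<rceil>) = real_of_int \<lceil>y\<rceil>" by simp
  moreover have "real_of_int \<lceil>y\<rceil> < y + 1" using ceiling_correct[of y] by linarith
  ultimately show ?thesis by linarith
qed

lemma Bsmall:
  fixes x eps C :: real and N L E :: nat
  assumes x0: "x > 0" and x: "x < exp 1" and eps: "eps \<ge> 0" "eps \<le> C"
    and L: "L = nat \<lceil>2 * x powr (2/3) * ln x\<rceil>" and E: "E = nat \<lceil>x\<rceil>"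
  shows "N * L + E * (if L = 0 then 1 else 2 * N / sqrt L + 2 * eps * E) \<le> N * (2 * exp 1 + 1) + (exp 1 + 1) * (1 + 2 * N + 2 * C * (exp 1 + 1))"
proof -
  have lnx: "ln x \<le> 1" using x x0 by (metis ln_exp ln_less_cancel_iff exp_gt_zero less_imp_le)
  have xp: "x powr (2/3) \<le> exp 1"
  proof (cases "x \<le> 1")
    case True then have "x powr (2/3) \<le> 1" using x0 by (intro powr_le1) auto
    then show ?thesis using exp_ge_add_one_self[of 1] by simp
  next
    case False then have "x powr (2/3) \<le> x powr 1" by (intro powr_mono) auto
    then show ?thesis using x x0 by simp
  qed
  have Lhi: "real L \<le> 2 * exp 1 + 1"
  proof -
    have "2 * x powr (2/3) * ln x \<le> 2 * x powr (2/3) * 1" using lnx by (intro mult_left_mono) auto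
    also have "\<dots> \<le> 2 * exp 1" using xp by simp
    finally have "max 0 (2 * x powr (2/3) * ln x) \<le> 2 * exp 1" by simp
    then show ?thesis unfolding L using nat_ceil_le[of "2 * x powr (2/3) * ln x"] by linarith
  qed
  have Ehi: "real E \<le> exp 1 + 1" unfolding E using x x0 nat_ceil_le[of x] by linarith
  have D: "(if L = 0 then 1 else 2 * N / sqrt L + 2 * eps * E) \<le> 1 + 2 * N + 2 * C * (exp 1 + 1)"
  proof (cases "L = 0")
    case True then show ?thesis using eps by simp
  next
    case False
    then have "sqrt L \<ge> 1" by simp
    then have a: "2 * N / sqrt L \<le> 2 * N" by (simp add: divide_le_eq mult_le_cancel_left1 order.trans[of _ "2 * real N"])
    have b: "2 * eps * E \<le> 2 * C * (exp 1 + 1)" using eps Ehi by (intro mult_mono) auto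
    show ?thesis using False a b by simp
  qed
  have D0: "0 \<le> (if L = 0 then 1 else 2 * N / sqrt L + 2 * eps * E)" using eps by simp
  have "E * (if L = 0 then 1 else 2 * N / sqrt L + 2 * eps * E) \<le> (exp 1 + 1) * (1 + 2 * N + 2 * C * (exp 1 + 1))"
    using Ehi D D0 by (intro mult_mono) auto
  moreover have "real N * real L \<le> N * (2 * exp 1 + 1)" using Lhi by (intro mult_left_mono) auto
  ultimately show ?thesis by simp
qed

lemma regret_general:
  fixes eps \<rho> l :: real and \<gamma> :: "nat \<Rightarrow> real"
  assumes env: "reward_env N T nu" and sv: "slowly_varying N T nu eps" and eps: "eps \<ge> 0"
    and l: "l > 0" and N: "N \<ge> 1" and T: "T \<ge> 1"
  shows "regret N T nu (lmdsee N 1 1 \<rho> \<gamma> l) \<le> (\<Sum>k\<in>{1..epoch_of 1 \<rho> l T}.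
     N * expl_len 1 \<rho> \<gamma> l k + epoch_len 1 \<rho> l k * (if expl_len 1 \<rho> \<gamma> l k = 0 then 1
       else 2 * N / sqrt (expl_len 1 \<rho> \<gamma> l k) + 2 * eps * epoch_len 1 \<rho> l k))"
proof -
  interpret alg N T nu \<rho> l eps \<gamma>
    by unfold_locales (use env sv eps l N in auto)
  show ?thesis
    using regret_le[OF T] unfolding B_def D_def by simp
qed

lemma epoch_facts:
  fixes eps \<rho> l :: real and \<gamma> :: "nat \<Rightarrow> real"
  assumes env: "reward_env N T nu" and sv: "slowly_varying N T nu eps" and eps: "eps \<ge> 0"
    and l: "l > 0" and N: "N \<ge> 1" and T: "T \<ge> 1"
  shows "1 \<le> epoch_of 1 \<rho> l T \<and> 1 + (\<Sum>i\<in>{1..<epoch_of 1 \<rho> l T}. epoch_len 1 \<rho> l i) \<le> T"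
proof -
  interpret alg N T nu \<rho> l eps \<gamma>
    by unfold_locales (use env sv eps l N in auto)
  show ?thesis using epoch_of_props[OF T] unfolding epoch_start_def by auto
qed

lemma K_bound:
  fixes \<rho> l :: real and T K :: nat
  assumes \<rho>: "\<rho> > 0" and l: "l > 0" and T: "T \<ge> 1" and K: "K \<ge> 1"
    and sK: "1 + (\<Sum>i\<in>{1..<K}. epoch_len 1 \<rho> l i) \<le> T"
  shows "real K \<le> (1 + 2 / l powr (1 / (1 + \<rho>))) * real T powr (1 / (1 + \<rho>))" "K \<le> T"
proof -
  define q where "q = 1 / (1 + \<rho>)"
  have q0: "q > 0" unfolding q_def using \<rho> by simp
  have E1: "epoch_len 1 \<rho> l i \<ge> 1" if "i \<ge> 1" for i
  proof -
    have "real i powr \<rho> * l > 0" using that l by simp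
    then show ?thesis unfolding epoch_len_def by simp linarith
  qed
  have "K - 1 \<le> (\<Sum>i\<in>{1..<K}. epoch_len 1 \<rho> l i)"
  proof -
    have "(\<Sum>i\<in>{1..<K}. (1::nat)) \<le> (\<Sum>i\<in>{1..<K}. epoch_len 1 \<rho> l i)" using E1 by (intro sum_mono) auto
    then show ?thesis by simp
  qed
  then show "K \<le> T" using sK K by linarith
  define n where "n = K - 1"
  have "(\<Sum>i\<in>{1..n}. real i powr \<rho> * l) \<le> (\<Sum>i\<in>{1..<K}. real (epoch_len 1 \<rho> l i))"
  proof -
    have eq: "{1..n} = {1..<K}" unfolding n_def using K by auto
    have "real i powr \<rho> * l \<le> real (epoch_len 1 \<rho> l i)" for i unfolding epoch_len_def by simp linarith
    then show ?thesis unfolding eq by (intro sum_mono) auto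
  qed
  also have "\<dots> \<le> T" using sK by (simp flip: of_nat_sum)
  finally have s1: "l * (\<Sum>i\<in>{1..n}. real i powr \<rho>) \<le> T" by (simp add: sum_distrib_left mult.commute)
  have "l * (real n / 2) powr (\<rho> + 1) \<le> T"
    using half_sum[of \<rho> n] \<rho> l s1 by (smt (verit) mult_left_mono)
  then have hs: "(real n / 2) powr (\<rho> + 1) \<le> T / l" using l by (simp add: field_simps)
  have q1: "(\<rho> + 1) * q = 1" unfolding q_def using \<rho> by simp
  have "real n / 2 = ((real n / 2) powr (\<rho> + 1)) powr q"
    unfolding powr_powr q1 by simp
  also have "\<dots> \<le> (T / l) powr q" using hs q0 by (intro powr_mono2) auto
  also have "\<dots> = T powr q / l powr q" by (simp add: powr_divide)
  finally have nb0: "real n / 2 \<le> T powr q / l powr q" .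
  have nb: "real n \<le> 2 * (T powr q / l powr q)" using nb0 by linarith
  have Tq: "T powr q \<ge> 1" using T q0 by (simp add: ge_one_powr_ge_zero)
  have "real K = 1 + real n" unfolding n_def using K by simp
  also have "\<dots> \<le> T powr q + 2 * (T powr q / l powr q)" using nb Tq by simp
  also have "\<dots> = (1 + 2 / l powr q) * T powr q" by (simp add: field_simps)
  finally show "real K \<le> (1 + 2 / l powr (1 / (1 + \<rho>))) * real T powr (1 / (1 + \<rho>))" unfolding q_def .
qed



lemma per_k:
  fixes \<rho> l eps C :: real and N k K T :: nat
  assumes \<rho>: "\<rho> > 0" and l: "l > 0" and eps: "eps \<ge> 0" "eps \<le> C"
    and k: "1 \<le> k" "k \<le> K" and KT: "K \<le> T"
    and L: "L = nat \<lceil>2 * (real k powr \<rho> * l) powr (2/3) * ln (real k powr \<rho> * l)\<rceil>"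
    and E: "E = nat \<lceil>real k powr \<rho> * l\<rceil>"
  shows "N * L + E * (if L = 0 then 1 else 2 * N / sqrt L + 2 * eps * E) \<le>
     (N * (2 * exp 1 + 1) + (exp 1 + 1) * (1 + 2 * N + 2 * C * (exp 1 + 1)))
     + N * (real K powr \<rho> * l) powr (2/3) * (2 * \<rho> * ln T + 2 * \<bar>ln l\<bar> + 5)
     + 8 * eps * (real K powr \<rho> * l)^2"
proof -
  define x where "x = real k powr \<rho> * l"
  define X where "X = real K powr \<rho> * l"
  define M0 where "M0 = N * (2 * exp 1 + 1) + (exp 1 + 1) * (1 + 2 * N + 2 * C * (exp 1 + 1))"
  define W where "W = 2 * \<rho> * ln T + 2 * \<bar>ln l\<bar> + 5"
  have x0: "x > 0" unfolding x_def using k l by simp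
  have xX: "x \<le> X" unfolding x_def X_def using k l \<rho> by (intro mult_right_mono powr_mono2) auto
  have M00: "M0 \<ge> 0" unfolding M0_def using eps by simp
  have lnT: "ln (real T) \<ge> 0" using k KT by simp
  have W0: "W \<ge> 0" unfolding W_def using \<rho> lnT by simp
  have r2: "N * X powr (2/3) * W \<ge> 0" using W0 by simp
  have r3: "8 * eps * X^2 \<ge> 0" using eps by simp
  show ?thesis
  proof (cases "x < exp 1")
    case True
    have "N * L + E * (if L = 0 then 1 else 2 * N / sqrt L + 2 * eps * E) \<le> M0"
      unfolding M0_def by (rule Bsmall[OF x0 True eps L[folded x_def] E[folded x_def]])
    then show ?thesis using r2 r3 unfolding M0_def W_def X_def by linarith
  next
    case False
    then have xe: "x \<ge> exp 1" by simp
    have b1: "N * L + E * (if L = 0 then 1 else 2 * N / sqrt L + 2 * eps * E) \<le> N * x powr (2/3) * (2 * ln x + 5) + 8 * eps * x^2"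
      by (rule Bx[OF xe eps(1) L[folded x_def] E[folded x_def]])
    have lnx: "ln x \<ge> 1" using xe x0 by (metis ln_exp ln_le_cancel_iff exp_gt_zero)
    have "ln x = \<rho> * ln k + ln l" unfolding x_def using k l by (simp add: ln_mult_pos)
    also have "\<dots> \<le> \<rho> * ln T + \<bar>ln l\<bar>"
    proof -
      have "ln (real k) \<le> ln (real T)" using k KT by simp
      then show ?thesis using \<rho> by (smt (verit) mult_left_mono)
    qed
    finally have lw: "2 * ln x + 5 \<le> W" unfolding W_def by simp
    have p1: "x powr (2/3) \<le> X powr (2/3)" using xX x0 by (intro powr_mono2) auto
    have "x powr (2/3) * (2 * ln x + 5) \<le> X powr (2/3) * W"
      using p1 lw lnx by (intro mult_mono) auto
    then have t1: "N * x powr (2/3) * (2 * ln x + 5) \<le> N * X powr (2/3) * W"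
      by (simp add: mult.assoc mult_left_mono)
    have "x^2 \<le> X^2" using xX x0 by (intro power_mono) auto
    then have t2: "8 * eps * x^2 \<le> 8 * eps * X^2" using eps by (intro mult_left_mono) auto
    show ?thesis using b1 t1 t2 M00 unfolding M0_def W_def X_def by linarith
  qed
qed



lemma exps:
  fixes kt :: real
  assumes "0 < kt" "kt < 4/3"
  defines "\<rho> \<equiv> 3 * kt / (4 - 3 * kt)"
  shows "\<rho> > 0" "(1 / (1 + \<rho>)) * (1 + 2 * \<rho> / 3) = (3 + 2*\<rho>) / (3 + 3*\<rho>)"
    "(1 / (1 + \<rho>)) * (1 + 2 * \<rho>) - kt = (3 + 2*\<rho>) / (3 + 3*\<rho>)"
    "1 / (1 + \<rho>) \<le> (3 + 2*\<rho>) / (3 + 3*\<rho>)"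
proof -
  have d: "4 - 3 * kt > 0" using assms by simp
  show r: "\<rho> > 0" unfolding \<rho>_def using assms d by simp
  show "(1 / (1 + \<rho>)) * (1 + 2 * \<rho> / 3) = (3 + 2*\<rho>) / (3 + 3*\<rho>)" using r by (simp add: field_simps)
  have "1 + \<rho> = 4 / (4 - 3 * kt)" unfolding \<rho>_def using d by (simp add: field_simps)
  show "(1 / (1 + \<rho>)) * (1 + 2 * \<rho>) - kt = (3 + 2*\<rho>) / (3 + 3*\<rho>)"
    unfolding \<rho>_def using d by (simp add: field_simps)
  show "1 / (1 + \<rho>) \<le> (3 + 2*\<rho>) / (3 + 3*\<rho>)" using r by (simp add: field_simps)
qed

lemma final_alg:
  fixes K T c1 a b q p \<kappa> C M0 A W' eps lnT :: real
  assumes K: "1 \<le> K" "K \<le> c1 * T powr q" and T: "T \<ge> 1" and c1: "c1 > 0"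
    and a: "a > 0" and b: "b > 0" and qa: "q * a = p" and qb: "q * b - \<kappa> \<le> p" and qp: "q \<le> p" and q0: "q > 0"
    and eps: "eps = C * T powr (-\<kappa>)" and C: "C > 0" and M0: "M0 \<ge> 0" and A: "A \<ge> 0"
    and W: "0 \<le> W" "W \<le> W' * lnT" and lnT: "lnT \<ge> 1"
  shows "K * M0 + A * W * K powr a + 8 * eps * K powr b \<le> (c1 * M0 + A * W' * c1 powr a + 8 * C * c1 powr b) * T powr p * lnT"
proof -
  have T0: "T > 0" using T by simp
  have Tp: "T powr p \<ge> 1" using T qp q0 by (simp add: ge_one_powr_ge_zero)
  have Wp: "W' \<ge> 0" using W lnT by (smt (verit) mult_nonneg_nonneg mult_le_cancel_right1 zero_le_mult_iff)
  have t1: "K * M0 \<le> c1 * M0 * T powr p * lnT"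
  proof -
    have "K \<le> c1 * T powr p" using K(2) powr_mono[OF qp T] c1 by (smt (verit) mult_left_mono)
    then have "K * M0 \<le> c1 * T powr p * M0" using M0 by (intro mult_right_mono) auto
    also have "\<dots> \<le> c1 * T powr p * M0 * lnT"
    proof -
      have "c1 * T powr p * M0 \<ge> 0" using M0 c1 Tp by simp
      then show ?thesis using lnT by (simp add: mult_le_cancel_left1)
    qed
    finally show ?thesis by (simp add: algebra_simps)
  qed
  have Ka: "K powr a \<le> c1 powr a * T powr p"
  proof -
    have "K powr a \<le> (c1 * T powr q) powr a" using K a by (intro powr_mono2) auto
    also have "\<dots> = c1 powr a * T powr p" using c1 T0 qa by (simp add: powr_mult powr_powr)
    finally show ?thesis .
  qed
  have t2: "A * W * K powr a \<le> A * W' * c1 powr a * T powr p * lnT"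
  proof -
    have "A * W * K powr a \<le> A * (W' * lnT) * (c1 powr a * T powr p)"
      using A W Ka by (intro mult_mono) auto
    then show ?thesis by (simp add: algebra_simps)
  qed
  have t3: "8 * eps * K powr b \<le> 8 * C * c1 powr b * T powr p * lnT"
  proof -
    have "K powr b \<le> (c1 * T powr q) powr b" using K b by (intro powr_mono2) auto
    also have "\<dots> = c1 powr b * T powr (q * b)" using c1 T0 by (simp add: powr_mult powr_powr)
    finally have Kb: "K powr b \<le> c1 powr b * T powr (q * b)" .
    have "eps * K powr b \<le> C * T powr (-\<kappa>) * (c1 powr b * T powr (q * b))"
      unfolding eps using Kb C by (intro mult_left_mono) auto
    also have "\<dots> = C * c1 powr b * T powr (q * b - \<kappa>)" by (simp add: powr_add[symmetric] algebra_simps)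
    also have "\<dots> \<le> C * c1 powr b * T powr p" using powr_mono[OF qb T] C c1 by (intro mult_left_mono) auto
    also have "\<dots> \<le> C * c1 powr b * T powr p * lnT"
    proof -
      have "C * c1 powr b * T powr p \<ge> 0" using C c1 Tp by simp
      then show ?thesis using lnT by (simp add: mult_le_cancel_left1)
    qed
    finally show ?thesis by (simp add: algebra_simps)
  qed
  show ?thesis using t1 t2 t3 by (simp add: algebra_simps)
qed



theorem theorem2:
  fixes N :: nat and \<kappa> \<kappa>max C l :: real
  assumes N_pos: "N \<ge> 1"
    and kappa_pos: "\<kappa> > 0" and C_pos: "C > 0"
    and kmax: "0 < \<kappa>max" "\<kappa>max < 4/3"
    and l_pos: "l > 0"
  defines "\<rho> \<equiv> 3 * min \<kappa> \<kappa>max / (4 - 3 * min \<kappa> \<kappa>max)"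
    and "\<gamma> \<equiv> (\<lambda>k::nat. 2 * (real k powr (3 * min \<kappa> \<kappa>max / (4 - 3 * min \<kappa> \<kappa>max)) * l) powr (2/3))"
  assumes l_ok: "\<forall>k\<ge>1. N * expl_len 1 \<rho> \<gamma> l k \<le> epoch_len 1 \<rho> l k"
  shows "\<exists>K T0. \<forall>T\<ge>T0. \<forall>nu. reward_env N T nu \<and> slowly_varying N T nu (C * real T powr (-\<kappa>)) \<longrightarrow>
           regret N T nu (lmdsee N 1 1 \<rho> \<gamma> l) \<le> K * real T powr ((3 + 2*\<rho>) / (3 + 3*\<rho>)) * ln (real T)"
proof -
  define kt where "kt = min \<kappa> \<kappa>max"
  have kt: "0 < kt" "kt < 4/3" "kt \<le> \<kappa>" unfolding kt_def using kappa_pos kmax by auto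
  have \<rho>e: "\<rho> = 3 * kt / (4 - 3 * kt)" unfolding \<rho>_def kt_def ..
  note ex = exps[OF kt(1,2), folded \<rho>e]
  have \<rho>0: "\<rho> > 0" by (rule ex(1))
  define q where "q = 1 / (1 + \<rho>)"
  define p where "p = (3 + 2*\<rho>) / (3 + 3*\<rho>)"
  define a where "a = 1 + 2 * \<rho> / 3"
  define b where "b = 1 + 2 * \<rho>"
  define c1 where "c1 = 1 + 2 / l powr (1 / (1 + \<rho>))"
  define M0 where "M0 = N * (2 * exp 1 + 1) + (exp 1 + 1) * (1 + 2 * N + 2 * C * (exp 1 + 1))"
  define W' where "W' = 2 * \<rho> + 2 * \<bar>ln l\<bar> + 5"
  define A where "A = N * l powr (2/3)"
  define Kc where "Kc = c1 * M0 + A * W' * c1 powr a + 8 * (C * l^2) * c1 powr b"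
  have qa: "q * a = p" unfolding q_def a_def p_def using ex(2) .
  have qb: "q * b - \<kappa> \<le> p" unfolding q_def b_def p_def using ex(3) kt(3) by linarith
  have qp: "q \<le> p" unfolding q_def p_def using ex(4) .
  have q0: "q > 0" unfolding q_def using \<rho>0 by simp
  have a0: "a > 0" unfolding a_def using \<rho>0 by simp
  have b0: "b > 0" unfolding b_def using \<rho>0 by simp
  have c10: "c1 > 0" unfolding c1_def using l_pos by (simp add: add_pos_nonneg)
  have M00: "M0 \<ge> 0" unfolding M0_def using C_pos by simp
  have A0: "A \<ge> 0" unfolding A_def by simp
  have main: "regret N T nu (lmdsee N 1 1 \<rho> \<gamma> l) \<le> Kc * real T powr p * ln (real T)"
    if T3: "T \<ge> 3" and env: "reward_env N T nu" and sv: "slowly_varying N T nu (C * real T powr (-\<kappa>))" for T nu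
  proof -
    define eps where "eps = C * real T powr (-\<kappa>)"
    have T1: "T \<ge> 1" using T3 by simp
    have eps0: "eps \<ge> 0" unfolding eps_def using C_pos by simp
    have epsC: "eps \<le> C"
    proof -
      have "real T powr (-\<kappa>) \<le> real T powr 0" using T1 kappa_pos by (intro powr_mono) auto
      then have "real T powr (-\<kappa>) \<le> 1" using T1 by simp
      then show ?thesis unfolding eps_def using C_pos by (simp add: mult_left_le)
    qed
    have lnT: "ln (real T) \<ge> 1"
    proof -
      have "exp 1 \<le> real T" using exp_le T3 by linarith
      then show ?thesis using T3 by (subst ln_ge_iff) auto
    qed
    define K where "K = epoch_of 1 \<rho> l T"
    have R: "regret N T nu (lmdsee N 1 1 \<rho> \<gamma> l) \<le> (\<Sum>k\<in>{1..K}.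
       real (N * expl_len 1 \<rho> \<gamma> l k) + real (epoch_len 1 \<rho> l k) * (if expl_len 1 \<rho> \<gamma> l k = 0 then 1
         else 2 * real N / sqrt (expl_len 1 \<rho> \<gamma> l k) + 2 * eps * real (epoch_len 1 \<rho> l k)))"
      unfolding K_def by (rule regret_general[OF env sv[folded eps_def] eps0 l_pos N_pos T1])
    have EF: "1 \<le> K \<and> 1 + (\<Sum>i\<in>{1..<K}. epoch_len 1 \<rho> l i) \<le> T"
      unfolding K_def by (rule epoch_facts[OF env sv[folded eps_def] eps0 l_pos N_pos T1])
    note KB0 = K_bound[OF \<rho>0 l_pos T1 conjunct1[OF EF] conjunct2[OF EF]]
    have KB: "real K \<le> c1 * real T powr q" "K \<le> T"
      using KB0 unfolding c1_def q_def by simp_all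
    define X where "X = real K powr \<rho> * l"
    define W where "W = 2 * \<rho> * ln T + 2 * \<bar>ln l\<bar> + 5"
    define Y where "Y = M0 + N * X powr (2/3) * W + 8 * eps * X^2"
    have perk: "N * expl_len 1 \<rho> \<gamma> l k + epoch_len 1 \<rho> l k * (if expl_len 1 \<rho> \<gamma> l k = 0 then 1
         else 2 * N / sqrt (expl_len 1 \<rho> \<gamma> l k) + 2 * eps * epoch_len 1 \<rho> l k) \<le> Y"
      if k: "k \<in> {1..K}" for k
    proof -
      have Leq: "expl_len 1 \<rho> \<gamma> l k = nat \<lceil>2 * (real k powr \<rho> * l) powr (2/3) * ln (real k powr \<rho> * l)\<rceil>"
        unfolding expl_len_def \<gamma>_def \<rho>_def by simp
      have Eeq: "epoch_len 1 \<rho> l k = nat \<lceil>real k powr \<rho> * l\<rceil>" unfolding epoch_len_def by simp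
      show ?thesis unfolding Y_def M0_def W_def X_def
        by (rule per_k[OF \<rho>0 l_pos eps0 epsC _ _ KB(2) Leq Eeq]) (use k in auto)
    qed
    have "regret N T nu (lmdsee N 1 1 \<rho> \<gamma> l) \<le> (\<Sum>k\<in>{1..K}. Y)"
    proof -
      have "(\<Sum>k\<in>{1..K}. real (N * expl_len 1 \<rho> \<gamma> l k) + real (epoch_len 1 \<rho> l k) * (if expl_len 1 \<rho> \<gamma> l k = 0 then 1
         else 2 * real N / sqrt (expl_len 1 \<rho> \<gamma> l k) + 2 * eps * real (epoch_len 1 \<rho> l k))) \<le> (\<Sum>k\<in>{1..K}. Y)"
      proof (rule sum_mono)
        fix k assume k: "k \<in> {1..K}"
        show "real (N * expl_len 1 \<rho> \<gamma> l k) + real (epoch_len 1 \<rho> l k) * (if expl_len 1 \<rho> \<gamma> l k = 0 then 1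
         else 2 * real N / sqrt (expl_len 1 \<rho> \<gamma> l k) + 2 * eps * real (epoch_len 1 \<rho> l k)) \<le> Y"
          using perk[OF k] by (cases "expl_len 1 \<rho> \<gamma> l k = 0") (simp_all add: of_nat_mult)
      qed
      then show ?thesis using R by linarith
    qed
    also have "\<dots> = real K * Y" by simp
    also have "\<dots> = real K * M0 + A * W * real K powr a + 8 * eps * l^2 * real K powr b"
    proof -
      have K0: "real K > 0" using EF by simp
      have x1: "X powr (2/3) = real K powr (\<rho> * (2/3)) * l powr (2/3)"
        unfolding X_def by (simp add: powr_mult powr_powr)
      have x2: "X^2 = real K powr (2 * \<rho>) * l^2"
        unfolding X_def using K0 by (simp add: power_mult_distrib powr_power)
      have k1: "real K * real K powr (\<rho> * (2/3)) = real K powr a"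
        unfolding a_def using K0 by (simp add: powr_add algebra_simps)
      have k2: "real K * real K powr (2 * \<rho>) = real K powr b"
        unfolding b_def using K0 by (simp add: powr_add algebra_simps)
      have "real K * Y = real K * M0 + A * W * (real K * real K powr (\<rho> * (2/3))) + 8 * eps * l^2 * (real K * real K powr (2 * \<rho>))"
        unfolding Y_def x1 x2 A_def by (simp add: algebra_simps)
      then show ?thesis unfolding k1 k2 .
    qed
    also have "\<dots> \<le> Kc * real T powr p * ln (real T)"
    proof -
      have W0: "0 \<le> W" unfolding W_def using \<rho>0 lnT by simp
      have WW: "W \<le> W' * ln (real T)"
      proof -
        have "(2 * \<bar>ln l\<bar> + 5) * 1 \<le> (2 * \<bar>ln l\<bar> + 5) * ln (real T)" using lnT by (intro mult_left_mono) auto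
        then show ?thesis unfolding W_def W'_def by (simp add: algebra_simps)
      qed
      have K1: "1 \<le> real K" using EF by simp
      have T1': "1 \<le> real T" using T1 by simp
      have e2: "eps * l^2 = (C * l^2) * real T powr (-\<kappa>)" unfolding eps_def by (simp add: algebra_simps)
      have C2: "C * l^2 > 0" using C_pos l_pos by simp
      have "real K * M0 + A * W * real K powr a + 8 * (eps * l^2) * real K powr b
          \<le> (c1 * M0 + A * W' * c1 powr a + 8 * (C * l^2) * c1 powr b) * real T powr p * ln (real T)"
        by (rule final_alg[OF K1 KB(1) T1' c10 a0 b0 qa qb qp q0 e2 C2 M00 A0 W0 WW lnT])
      moreover have "8 * eps * l^2 * real K powr b = 8 * (eps * l^2) * real K powr b" by simp
      ultimately show ?thesis unfolding Kc_def by simp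
    qed
    finally show ?thesis .
  qed
  show ?thesis
    unfolding p_def[symmetric]
    by (rule exI[of _ Kc], rule exI[of _ 3]) (use main in auto)
qed


end
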